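(* Let $V:[0,\infty)\to\mathbb{R}$ be càdlàg with finite variation on compact intervals. Then the set of complex levels for $V$ has zero Lebesgue measure.
   Context: $V(t-)$ denotes the left limit and $\Delta V(t)=V(t)-V(t-)$. A level $x\in\mathbb{R}$ is called simple for $V$ if two conditions hold. First, the set $\{t>0: V(t-)<x<V(t)\text{ or }V(t)<x<V(t-)\text{ or }V(t)=x\}$ is discrete, i.e. has no accumulation point in $[0,\infty)$. Second, there is no $t>0$ with $\Delta V(t)\neq0$ and $x\in\{V(t),V(t-)\}$. A level that is not simple is called complex. *)

theory Defs
  imports "HOL-Analysis.Analysis"
begin

definition left_lim :: "(real \<Rightarrow> real) \<Rightarrow> real \<Rightarrow> real" where
  "left_lim V t = Lim (at_left t) V"

definition jump :: "(real \<Rightarrow> real) \<Rightarrow> real \<Rightarrow> real" where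
  "jump V t = V t - left_lim V t"

definition cadlag_on_nonneg :: "(real \<Rightarrow> real) \<Rightarrow> bool" where
  "cadlag_on_nonneg V \<longleftrightarrow>
     (\<forall>t\<ge>0. (V \<longlongrightarrow> V t) (at_right t)) \<and>
     (\<forall>t>0. \<exists>l. (V \<longlongrightarrow> l) (at_left t))"

definition bounded_variation_on :: "(real \<Rightarrow> real) \<Rightarrow> real \<Rightarrow> real \<Rightarrow> bool" where
  "bounded_variation_on V a b \<longleftrightarrow>
     (\<exists>M. \<forall>(n::nat) (p::nat \<Rightarrow> real).
        p 0 = a \<and> p n = b \<and> (\<forall>i<n. p i \<le> p (Suc i)) \<longrightarrow>
        (\<Sum>i<n. \<bar>V (p (Suc i)) - V (p i)\<bar>) \<le> M)"

definition finite_variation_on_compacts :: "(real \<Rightarrow> real) \<Rightarrow> bool" where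
  "finite_variation_on_compacts V \<longleftrightarrow> (\<forall>T\<ge>0. bounded_variation_on V 0 T)"

definition crossing_set :: "(real \<Rightarrow> real) \<Rightarrow> real \<Rightarrow> real set" where
  "crossing_set V x = {t. t > 0 \<and>
      ((left_lim V t < x \<and> x < V t) \<or> (V t < x \<and> x < left_lim V t) \<or> V t = x)}"

definition simple_level :: "(real \<Rightarrow> real) \<Rightarrow> real \<Rightarrow> bool" where
  "simple_level V x \<longleftrightarrow>
     (\<forall>s\<ge>0. \<not> s islimpt crossing_set V x) \<and>
     \<not> (\<exists>t>0. jump V t \<noteq> 0 \<and> (x = V t \<or> x = left_lim V t))"

definition complex_level :: "(real \<Rightarrow> real) \<Rightarrow> real \<Rightarrow> bool" where
  "complex_level V x \<longleftrightarrow> \<not> simple_level V x"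

end

theory Submission
  imports Defs
begin


lemma left_lim_tendsto:
  assumes "cadlag_on_nonneg V" "t > 0"
  shows "(V \<longlongrightarrow> left_lim V t) (at_left t)"
proof -
  obtain l where "(V \<longlongrightarrow> l) (at_left t)" using assms unfolding cadlag_on_nonneg_def by blast
  then show ?thesis unfolding left_lim_def using tendsto_Lim trivial_limit_at_left_real by blast
qed

lemma sum_every_third:
  fixes g :: "nat \<Rightarrow> real"
  assumes "\<And>j. g j \<ge> 0"
  shows "(\<Sum>i<k. g (3*i+1)) \<le> (\<Sum>j<3*k. g j)"
proof (induction k)
  case 0 then show ?case by simp
next
  case (Suc k)
  have e: "3 * Suc k = Suc (Suc (Suc (3*k)))" by simp
  show ?case unfolding e using Suc assms[of "3*k"] assms[of "3*k+2"]
    by (simp add: sum.lessThan_Suc)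
qed

lemma part_sum:
  fixes V :: "real \<Rightarrow> real" and a u v :: "nat \<Rightarrow> real"
  assumes bv: "\<forall>(n::nat) (p::nat \<Rightarrow> real).
        p 0 = 0 \<and> p n = T \<and> (\<forall>i<n. p i \<le> p (Suc i)) \<longrightarrow>
        (\<Sum>i<n. \<bar>V (p (Suc i)) - V (p i)\<bar>) \<le> M"
    and a0: "a 0 = 0" and ak: "a k = T"
    and uv: "\<And>i. i < k \<Longrightarrow> a i \<le> u i \<and> u i \<le> a (Suc i) \<and> a i \<le> v i \<and> v i \<le> a (Suc i)"
  shows "(\<Sum>i<k. \<bar>V (u i) - V (v i)\<bar>) \<le> M"
proof -
  define p where "p j = (if j mod 3 = 0 then a (j div 3) else if j mod 3 = 1
     then min (u (j div 3)) (v (j div 3)) else max (u (j div 3)) (v (j div 3)))" for j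
  have p1: "p (3*i) = a i" "p (3*i+1) = min (u i) (v i)" "p (3*i+2) = max (u i) (v i)" for i
  proof -
    have "(3*i+1) div 3 = i" "(3*i+1) mod 3 = 1" "(3*i+2) div 3 = i" "(3*i+2) mod 3 = 2" by presburger+
    then show "p (3*i) = a i" "p (3*i+1) = min (u i) (v i)" "p (3*i+2) = max (u i) (v i)"
      unfolding p_def by auto
  qed
  have mono: "p j \<le> p (Suc j)" if "j < 3*k" for j
  proof -
    obtain i r where ir: "j = 3*i + r" "r < 3" by (metis div_mult_mod_eq mod_less_divisor zero_less_numeral mult.commute)
    have ik: "i < k" using that ir by linarith
    consider "r = 0" | "r = 1" | "r = 2" using ir by linarith
    then show ?thesis
    proof cases
      case 1
      have "Suc j = 3*i+1" "j = 3*i" using ir 1 by simp_all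
      then show ?thesis using p1[of i] uv[OF ik] by simp
    next
      case 2
      have "Suc j = 3*i+2" using ir 2 by simp
      then show ?thesis using ir 2 p1[of i] by simp
    next
      case 3
      have "Suc j = 3 * Suc i" using ir 3 by simp
      have "j = 3*i+2" using ir 3 by simp
      have A: "p (Suc j) = a (Suc i)" using \<open>Suc j = 3 * Suc i\<close> p1(1)[of "Suc i"] by metis
      have B: "p j = max (u i) (v i)" using \<open>j = 3*i+2\<close> p1(3)[of i] by metis
      show ?thesis unfolding A B using uv[OF ik] by simp
    qed
  qed
  have "(\<Sum>i<k. \<bar>V (u i) - V (v i)\<bar>) = (\<Sum>i<k. \<bar>V (p (Suc (3*i+1))) - V (p (3*i+1))\<bar>)"
  proof (rule sum.cong)
    fix i assume "i \<in> {..<k}"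
    have "Suc (3*i+1) = 3*i+2" by simp
    then show "\<bar>V (u i) - V (v i)\<bar> = \<bar>V (p (Suc (3*i+1))) - V (p (3*i+1))\<bar>"
      using p1[of i] by (cases "u i \<le> v i") (auto simp: max_def min_def abs_minus_commute)
  qed simp
  also have "\<dots> \<le> (\<Sum>j<3*k. \<bar>V (p (Suc j)) - V (p j)\<bar>)"
    by (rule sum_every_third[where g = "\<lambda>j. \<bar>V (p (Suc j)) - V (p j)\<bar>"]) simp
  also have "\<dots> \<le> M"
    using bv[rule_format, of p "3*k"] p1[of 0] p1[of k] a0 ak mono by simp
  finally show ?thesis .
qed

lemma jump_bound_interval:
  assumes cad: "cadlag_on_nonneg V" and e: "\<forall>u\<in>{a<..<b}. \<bar>V u - c\<bar> < e"
    and t: "a < t" "t < b" "t > 0"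
  shows "\<bar>jump V t\<bar> \<le> 2*e"
proof -
  have L: "(V \<longlongrightarrow> left_lim V t) (at_left t)" using left_lim_tendsto[OF cad t(3)] .
  have "((\<lambda>u. \<bar>V u - c\<bar>) \<longlongrightarrow> \<bar>left_lim V t - c\<bar>) (at_left t)"
    by (intro tendsto_intros L)
  moreover have "eventually (\<lambda>u. \<bar>V u - c\<bar> \<le> e) (at_left t)"
    using eventually_at_left_real[OF t(1)] by eventually_elim (use e t in \<open>force\<close>)
  ultimately have "\<bar>left_lim V t - c\<bar> \<le> e"
    by (rule tendsto_upperbound) (simp add: trivial_limit_at_left_real)
  moreover have "\<bar>V t - c\<bar> < e" using e t by auto
  ultimately show ?thesis unfolding jump_def by linarith
qed

lemma big_jumps_finite:
  assumes cad: "cadlag_on_nonneg V" and e: "e > 0"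
  shows "finite {t. 0 < t \<and> t \<le> T \<and> e < \<bar>jump V t\<bar>}" (is "finite ?S")
proof (rule ccontr)
  assume inf: "infinite ?S"
  have "?S \<subseteq> {0..T}" by auto
  then obtain s where s: "s \<in> {0..T}" "s islimpt ?S"
    using Heine_Borel_imp_Bolzano_Weierstrass[OF compact_Icc inf] by blast
  have s0: "s \<ge> 0" using s(1) by simp
  have "(V \<longlongrightarrow> V s) (at_right s)" using cad s0 unfolding cadlag_on_nonneg_def by blast
  then have "eventually (\<lambda>u. dist (V u) (V s) < e/2) (at_right s)"
    using e by (intro tendstoD) auto
  then obtain b1 where b1: "b1 > s" "\<forall>y>s. y < b1 \<longrightarrow> dist (V y) (V s) < e/2"
    unfolding eventually_at_right_field by blast
  have R: "\<bar>jump V t\<bar> \<le> e" if "s < t" "t < b1" for t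
  proof -
    have "\<forall>u\<in>{s<..<b1}. \<bar>V u - V s\<bar> < e/2" using b1(2) by (simp add: dist_real_def)
    moreover have "t > 0" using that s0 by simp
    ultimately have "\<bar>jump V t\<bar> \<le> 2*(e/2)"
      using jump_bound_interval[OF cad, of s b1 "V s" "e/2" t] that by blast
    then show ?thesis by simp
  qed
  obtain b2 where b2: "b2 < s" "\<And>t. b2 < t \<Longrightarrow> t < s \<Longrightarrow> t > 0 \<Longrightarrow> \<bar>jump V t\<bar> \<le> e"
  proof (cases "s > 0")
    case True
    have "(V \<longlongrightarrow> left_lim V s) (at_left s)" using left_lim_tendsto[OF cad True] .
    then have "eventually (\<lambda>u. dist (V u) (left_lim V s) < e/2) (at_left s)"
      using e by (intro tendstoD) auto
    then obtain b where b: "b < s" "\<forall>y>b. y < s \<longrightarrow> dist (V y) (left_lim V s) < e/2"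
      unfolding eventually_at_left_field by blast
    show ?thesis
    proof (rule that[OF b(1)])
      fix t assume t: "b < t" "t < s" "t > 0"
      have "\<forall>u\<in>{b<..<s}. \<bar>V u - left_lim V s\<bar> < e/2" using b(2) by (simp add: dist_real_def)
      then have "\<bar>jump V t\<bar> \<le> 2*(e/2)"
        using jump_bound_interval[OF cad, of b s "left_lim V s" "e/2" t] t by blast
      then show "\<bar>jump V t\<bar> \<le> e" by simp
    qed
  next
    case False
    then have "s = 0" using s0 by simp
    show ?thesis by (rule that[of "s - 1"]) (use \<open>s = 0\<close> in simp_all)
  qed
  define d where "d = min (b1 - s) (s - b2)"
  have "d > 0" using b1(1) b2(1) by (simp add: d_def)
  then obtain y where y: "y \<in> ?S" "y \<noteq> s" "dist y s < d"
    using s(2) unfolding islimpt_approachable by blast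
  show False
  proof (cases "y > s")
    case True
    moreover have "y < b1" using y(3) True by (simp add: d_def dist_real_def)
    ultimately have "\<bar>jump V y\<bar> \<le> e" using R[of y] by simp
    then show False using y(1) by simp
  next
    case False
    then have "y < s" using y(2) by simp
    moreover have "y > b2" using y(3) \<open>y < s\<close> by (simp add: d_def dist_real_def)
    moreover have "y > 0" using y(1) by simp
    ultimately have "\<bar>jump V y\<bar> \<le> e" using b2(2)[of y] by simp
    then show False using y(1) by simp
  qed
qed

lemma jumps_countable:
  assumes cad: "cadlag_on_nonneg V"
  shows "countable {t. 0 < t \<and> jump V t \<noteq> 0}"
proof -
  have "{t. 0 < t \<and> jump V t \<noteq> 0} \<subseteq>
     (\<Union>n::nat. \<Union>m::nat. {t. 0 < t \<and> t \<le> real n \<and> 1/(Suc m) < \<bar>jump V t\<bar>})"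
  proof
    fix t assume t: "t \<in> {t. 0 < t \<and> jump V t \<noteq> 0}"
    obtain n::nat where n: "t \<le> real n" using real_arch_simple by blast
    obtain m::nat where m: "1 / real (Suc m) < \<bar>jump V t\<bar>"
      using t reals_Archimedean[of "\<bar>jump V t\<bar>"] by (auto simp: divide_inverse)
    show "t \<in> (\<Union>n::nat. \<Union>m::nat. {t. 0 < t \<and> t \<le> real n \<and> 1/(Suc m) < \<bar>jump V t\<bar>})"
      using t n m by blast
  qed
  moreover have "countable (\<Union>n::nat. \<Union>m::nat. {t. 0 < t \<and> t \<le> real n \<and> 1/(Suc m) < \<bar>jump V t\<bar>})"
  proof (intro countable_UN countableI_type)
    fix n m :: nat
    have "(0::real) < 1 / real (Suc m)" by simp
    then show "countable {t. 0 < t \<and> t \<le> real n \<and> 1/(Suc m) < \<bar>jump V t\<bar>}"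
      by (intro countable_finite big_jumps_finite[OF cad])
  qed
  ultimately show ?thesis by (rule countable_subset)
qed



lemma idx_lemma:
  fixes T t :: real and k :: nat
  assumes T: "T > 0" and k: "k > 0" and t: "0 < t" "t \<le> T"
  defines "i \<equiv> nat \<lceil>t * real k / T\<rceil> - 1"
  shows "i < k" "T * real i / real k < t" "t \<le> T * real (Suc i) / real k"
proof -
  define q where "q = t * real k / T"
  have q: "0 < q" "q \<le> real k" using T k t by (auto simp: q_def field_simps)
  define c where "c = \<lceil>q\<rceil>"
  have c1: "c \<ge> 1" using q(1) le_of_int_ceiling[of q] unfolding c_def by linarith
  have ck: "c \<le> int k" using q(2) unfolding c_def by (simp add: ceiling_le_iff)
  have cq: "real_of_int c - 1 < q" "q \<le> real_of_int c" using ceiling_correct[of q] unfolding c_def by auto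
  have ic: "real i = real_of_int c - 1" "real (Suc i) = real_of_int c"
    using c1 unfolding i_def q_def[symmetric] c_def[symmetric] by auto
  show "i < k" using c1 ck unfolding i_def q_def[symmetric] c_def[symmetric] by linarith
  have "real i < q" using ic cq by linarith
  then show "T * real i / real k < t" using T k by (simp add: q_def field_simps)
  have "q \<le> real (Suc i)" using ic cq by linarith
  then show "t \<le> T * real (Suc i) / real k" using T k by (simp add: q_def field_simps)
qed


lemma null_A:
  fixes V :: "real \<Rightarrow> real"
  assumes cad: "cadlag_on_nonneg V" and bv: "bounded_variation_on V 0 T" and T: "T > 0"
  shows "{x. infinite (crossing_set V x \<inter> {0<..T})} \<in> null_sets lebesgue"
proof -
  obtain M where M: "\<forall>(n::nat) (p::nat \<Rightarrow> real).
        p 0 = 0 \<and> p n = T \<and> (\<forall>i<n. p i \<le> p (Suc i)) \<longrightarrow>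
        (\<Sum>i<n. \<bar>V (p (Suc i)) - V (p i)\<bar>) \<le> M"
    using bv unfolding bounded_variation_on_def by blast
  have bnd: "\<bar>V t - V 0\<bar> \<le> M" if "0 \<le> t" "t \<le> T" for t
  proof -
    define p where "p = (\<lambda>j::nat. if j = 0 then 0 else if j = 1 then t else T)"
    have "\<forall>i<2. p i \<le> p (Suc i)"
    proof (intro allI impI)
      fix i :: nat assume "i < 2"
      then consider "i = 0" | "i = 1" by linarith
      then show "p i \<le> p (Suc i)" by cases (use that in \<open>simp_all add: p_def\<close>)
    qed
    moreover have "p 0 = 0" "p 2 = T" by (simp_all add: p_def)
    ultimately have "(\<Sum>i<2. \<bar>V (p (Suc i)) - V (p i)\<bar>) \<le> M" using M by blast
    then have "\<bar>V t - V 0\<bar> + \<bar>V T - V t\<bar> \<le> M" by (simp add: p_def numeral_2_eq_2)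
    then show ?thesis by linarith
  qed
  have M0: "M \<ge> 0" using bnd[of 0] T by simp
  have bddA: "bdd_above (V ` {0..T})"
    by (rule bdd_aboveI2[of _ _ "V 0 + M"]) (use bnd in \<open>force\<close>)
  have bddB: "bdd_below (V ` {0..T})"
    by (rule bdd_belowI2[of _ "V 0 - M"]) (use bnd in \<open>force\<close>)
  define a where "a k i = T * real i / real k" for k i :: nat
  define I where "I k i = {a k i .. a k (Suc i)}" for k i
  define lo where "lo k i = Inf (V ` I k i)" for k i
  define hi where "hi k i = Sup (V ` I k i)" for k i
  define C where "C k i = {lo k i .. hi k i}" for k i
  define E where "E N k = {x. N \<le> card {i. i < k \<and> x \<in> C k i}}" for N k
  have Isub: "I k i \<subseteq> {0..T}" if "i < k" for k i
  proof -
    have "a k i \<ge> 0" using T by (simp add: a_def)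
    moreover have "a k (Suc i) \<le> T"
    proof -
      have "T * real (Suc i) \<le> T * real k" using T that by (intro mult_left_mono) auto
      then show ?thesis using that by (simp add: a_def divide_le_eq)
    qed
    ultimately show ?thesis by (auto simp: I_def)
  qed
  have Ine: "I k i \<noteq> {}" for k i
  proof -
    have "a k i \<le> a k (Suc i)" using T by (simp add: a_def divide_right_mono)
    then show ?thesis by (simp add: I_def)
  qed
  have lohi: "lo k i \<le> V u \<and> V u \<le> hi k i" if "i < k" "u \<in> I k i" for k i u
  proof -
    have "bdd_above (V ` I k i)" using bdd_above_mono[OF bddA] Isub[OF that(1)] by (meson image_mono)
    moreover have "bdd_below (V ` I k i)" using bdd_below_mono[OF bddB] Isub[OF that(1)] by (meson image_mono)
    ultimately show ?thesis unfolding lo_def hi_def using that(2) by (auto intro: cInf_lower cSup_upper)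
  qed
  have bdds: "bdd_above (V ` I k i) \<and> bdd_below (V ` I k i)" if "i < k" for k i
  proof -
    have "bdd_above (V ` I k i)" using bdd_above_mono[OF bddA] Isub[OF that(1)] by (meson image_mono)
    moreover have "bdd_below (V ` I k i)" using bdd_below_mono[OF bddB] Isub[OF that(1)] by (meson image_mono)
    ultimately show ?thesis by simp
  qed
  have osc: "(\<Sum>i<k. hi k i - lo k i) \<le> M" if k: "k > 0" for k
  proof (rule ccontr)
    define S where "S = (\<Sum>i<k. hi k i - lo k i)"
    assume "\<not> (\<Sum>i<k. hi k i - lo k i) \<le> M"
    then have SM: "S > M" by (simp add: S_def)
    define e where "e = (S - M) / (2 * real k)"
    have e: "e > 0" using SM k by (simp add: e_def)
    define P where "P i uv \<longleftrightarrow> fst uv \<in> I k i \<and> snd uv \<in> I k i \<and> hi k i - e < V (fst uv) \<and> V (snd uv) < lo k i + e" for i uv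
    have ex: "\<exists>uv. P i uv" if ik: "i < k" for i
    proof -
      have ne: "V ` I k i \<noteq> {}" using Ine[of k i] by simp
      have "hi k i - e < Sup (V ` I k i)" using e by (simp add: hi_def)
      then obtain u where u: "u \<in> I k i" "hi k i - e < V u"
        using less_cSup_iff[OF ne] bdds[OF ik] by auto
      have "Inf (V ` I k i) < lo k i + e" using e by (simp add: lo_def)
      then obtain v where v: "v \<in> I k i" "V v < lo k i + e"
        using cInf_less_iff[OF ne] bdds[OF ik] by auto
      show ?thesis unfolding P_def by (rule exI[of _ "(u, v)"]) (use u v in simp)
    qed
    define uv where "uv i = (SOME p. P i p)" for i
    have Puv: "P i (uv i)" if "i < k" for i
      unfolding uv_def using someI_ex[OF ex[OF that]] .
    have part: "(\<Sum>i<k. \<bar>V (fst (uv i)) - V (snd (uv i))\<bar>) \<le> M"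
    proof (rule part_sum[OF M, of "a k"])
      show "a k 0 = 0" by (simp add: a_def)
      show "a k k = T" using k by (simp add: a_def)
      fix i assume "i < k"
      then show "a k i \<le> fst (uv i) \<and> fst (uv i) \<le> a k (Suc i) \<and> a k i \<le> snd (uv i) \<and> snd (uv i) \<le> a k (Suc i)"
        using Puv[of i] unfolding P_def I_def by auto
    qed
    have "(\<Sum>i<k. hi k i - lo k i - 2*e) < (\<Sum>i<k. \<bar>V (fst (uv i)) - V (snd (uv i))\<bar>)"
    proof (rule sum_strict_mono)
      show "finite {..<k}" by simp
      show "{..<k} \<noteq> {}" using k by auto
      fix i assume "i \<in> {..<k}"
      then show "hi k i - lo k i - 2*e < \<bar>V (fst (uv i)) - V (snd (uv i))\<bar>"
        using Puv[of i] unfolding P_def by auto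
    qed
    moreover have "(\<Sum>i<k. hi k i - lo k i - 2*e) = S - real k * (2*e)"
      by (simp add: sum_subtractf S_def)
    moreover have "S - real k * (2*e) = M" using k by (simp add: e_def field_simps)
    ultimately show False using part by linarith
  qed
  have Eclosed: "closed (E N k)" for N k
  proof -
    have eq: "E N k = (\<Union>J\<in>{J. J \<subseteq> {..<k} \<and> card J = N}. \<Inter>i\<in>J. C k i)"
    proof (intro equalityI subsetI)
      fix x assume "x \<in> E N k"
      then have "N \<le> card {i. i<k \<and> x \<in> C k i}" by (simp add: E_def)
      then obtain J where "J \<subseteq> {i. i<k \<and> x\<in>C k i}" "card J = N" by (rule obtain_subset_with_card_n)
      then show "x \<in> (\<Union>J\<in>{J. J \<subseteq> {..<k} \<and> card J = N}. \<Inter>i\<in>J. C k i)" by auto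
    next
      fix x assume "x \<in> (\<Union>J\<in>{J. J \<subseteq> {..<k} \<and> card J = N}. \<Inter>i\<in>J. C k i)"
      then obtain J where J: "J \<subseteq> {..<k}" "card J = N" "\<forall>i\<in>J. x\<in>C k i" by auto
      then have "J \<subseteq> {i. i<k \<and> x\<in>C k i}" by auto
      then have "card J \<le> card {i. i<k \<and> x\<in>C k i}" by (intro card_mono) auto
      then show "x \<in> E N k" using J by (simp add: E_def)
    qed
    have "finite {J. J \<subseteq> {..<k} \<and> card J = N}" by (rule finite_subset[of _ "Pow {..<k}"]) auto
    then show ?thesis unfolding eq by (intro closed_UN ballI closed_INT) (auto simp: C_def)
  qed
  have Emeas: "emeasure lborel (E N k) \<le> ennreal (M / real N)" if kN: "k > 0" "N > 0" for N k
  proof -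
    have Esets: "E N k \<in> sets lborel" using Eclosed[of N k] by (simp add: borel_closed)
    have Csets: "C k i \<in> sets lborel" for i by (simp add: C_def)
    have ptw: "ennreal (real N) * indicator (E N k) x \<le> (\<Sum>i<k. indicator (C k i) x)" for x
    proof (cases "x \<in> E N k")
      case True
      have "(\<Sum>i<k. indicator (C k i) x :: ennreal) = of_nat (card ({..<k} \<inter> {i. x \<in> C k i}))"
        unfolding indicator_def by (simp add: sum.If_cases)
      also have "{..<k} \<inter> {i. x \<in> C k i} = {i. i<k \<and> x \<in> C k i}" by auto
      finally have "(\<Sum>i<k. indicator (C k i) x :: ennreal) = ennreal (real (card {i. i<k \<and> x \<in> C k i}))"
        by (simp add: ennreal_of_nat_eq_real_of_nat)
      moreover have "N \<le> card {i. i<k \<and> x \<in> C k i}" using True by (simp add: E_def)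
      ultimately show ?thesis using True by (simp add: ennreal_leI)
    next
      case False
      then show ?thesis by simp
    qed
    have lohi': "lo k i \<le> hi k i" if "i < k" for i
    proof -
      obtain u where "u \<in> I k i" using Ine[of k i] by blast
      then show ?thesis using lohi[OF that] by force
    qed
    have "ennreal (real N) * emeasure lborel (E N k) = (\<integral>\<^sup>+x. ennreal (real N) * indicator (E N k) x \<partial>lborel)"
      by (rule nn_integral_cmult_indicator[symmetric]) (rule Esets)
    also have "\<dots> \<le> (\<integral>\<^sup>+x. (\<Sum>i<k. indicator (C k i) x) \<partial>lborel)"
      by (intro nn_integral_mono ptw)
    also have "\<dots> = (\<Sum>i<k. \<integral>\<^sup>+x. indicator (C k i) x \<partial>lborel)"
      by (rule nn_integral_sum) (simp add: C_def)
    also have "\<dots> = (\<Sum>i<k. ennreal (hi k i - lo k i))"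
      by (intro sum.cong refl) (simp add: Csets C_def emeasure_lborel_Icc_eq lohi')
    also have "\<dots> = ennreal (\<Sum>i<k. hi k i - lo k i)"
      by (rule sum_ennreal) (simp add: lohi')
    also have "\<dots> \<le> ennreal M" by (intro ennreal_leI osc kN)
    also have "\<dots> = ennreal (real N) * ennreal (M / real N)"
      using kN M0 by (simp add: ennreal_mult[symmetric])
    finally show ?thesis
      using kN by (subst (asm) ennreal_mult_le_mult_iff) auto
  qed
  have key: "\<exists>K. \<forall>k\<ge>K. x \<in> E N k" if xinf: "infinite (crossing_set V x \<inter> {0<..T})" for x N
  proof -
    obtain F where F: "finite F" "card F = N" "F \<subseteq> crossing_set V x \<inter> {0<..T}"
      using infinite_arbitrarily_large[OF xinf] by blast
    have ev1: "eventually (\<lambda>k. \<forall>t\<in>F. \<forall>t'\<in>F. t \<noteq> t' \<longrightarrow> T / real k < \<bar>t - t'\<bar>) sequentially"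
    proof (intro eventually_ball_finite F(1) ballI)
      fix t t' assume "t \<in> F" "t' \<in> F"
      show "eventually (\<lambda>k. t \<noteq> t' \<longrightarrow> T / real k < \<bar>t - t'\<bar>) sequentially"
      proof (cases "t = t'")
        case True then show ?thesis by simp
      next
        case False
        then have "\<bar>t - t'\<bar> > 0" by simp
        from order_tendstoD(2)[OF lim_const_over_n[of T] this] show ?thesis
          by eventually_elim simp
      qed
    qed
    have ev2: "eventually (\<lambda>k. k > 0) sequentially" by (rule eventually_gt_at_top)
    have "eventually (\<lambda>k. x \<in> E N k) sequentially"
      using ev1 ev2
    proof eventually_elim
      case (elim k)
      note sep = elim(1) and k = elim(2)
      define idx where "idx t = nat \<lceil>t * real k / T\<rceil> - 1" for t
      have idxp: "idx t < k \<and> a k (idx t) < t \<and> t \<le> a k (Suc (idx t))" if "t \<in> F" for t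
      proof -
        have "0 < t" "t \<le> T" using F(3) that by auto
        then show ?thesis using idx_lemma[OF T k, of t] unfolding idx_def a_def by auto
      qed
      have inC: "x \<in> C k (idx t)" if tF: "t \<in> F" for t
      proof -
        define i where "i = idx t"
        have ik: "i < k" and at: "a k i < t" "t \<le> a k (Suc i)" using idxp[OF tF] by (auto simp: i_def)
        have t0: "t > 0" using F(3) tF by auto
        have cr: "(left_lim V t < x \<and> x < V t) \<or> (V t < x \<and> x < left_lim V t) \<or> V t = x"
          using F(3) tF by (auto simp: crossing_set_def)
        have "t \<in> I k i" using at by (simp add: I_def)
        then have Vt: "lo k i \<le> V t \<and> V t \<le> hi k i" using lohi[OF ik] by blast
        have L: "(V \<longlongrightarrow> left_lim V t) (at_left t)" by (rule left_lim_tendsto[OF cad t0])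
        have evI: "eventually (\<lambda>u. lo k i \<le> V u \<and> V u \<le> hi k i) (at_left t)"
          using eventually_at_left_real[OF at(1)]
        proof eventually_elim
          case (elim u)
          then have "u \<in> I k i" using at by (auto simp: I_def)
          then show ?case using lohi[OF ik] by blast
        qed
        have nb: "\<not> trivial_limit (at_left t)" by (simp add: trivial_limit_at_left_real)
        have "lo k i \<le> left_lim V t"
          by (rule tendsto_lowerbound[OF L _ nb]) (use evI in \<open>rule eventually_mono\<close>, simp)
        moreover have "left_lim V t \<le> hi k i"
          by (rule tendsto_upperbound[OF L _ nb]) (use evI in \<open>rule eventually_mono\<close>, simp)
        ultimately show ?thesis using Vt cr unfolding C_def i_def by auto
      qed
      have len: "a k (Suc i) - a k i = T / real k" for i
        using k by (simp add: a_def field_simps)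
      have inj: "inj_on idx F"
      proof (rule inj_onI)
        fix t t' assume tt: "t \<in> F" "t' \<in> F" "idx t = idx t'"
        show "t = t'"
        proof (rule ccontr)
          assume ne: "t \<noteq> t'"
          have "\<bar>t - t'\<bar> < T / real k"
            using idxp[OF tt(1)] idxp[OF tt(2)] tt(3) len[of "idx t"] by auto
          then show False using sep tt ne by force
        qed
      qed
      have "card (idx ` F) = N" using card_image[OF inj] F(2) by simp
      moreover have "idx ` F \<subseteq> {i. i < k \<and> x \<in> C k i}" using idxp inC by auto
      moreover have "finite {i. i < k \<and> x \<in> C k i}" by simp
      ultimately have "N \<le> card {i. i<k \<and> x \<in> C k i}" by (metis card_mono)
      then show ?case by (simp add: E_def)
    qed
    then show ?thesis unfolding eventually_sequentially by blast
  qed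
  define D where "D N K = (\<Inter>k\<in>{Suc K..}. E N k)" for N K
  have Dsets: "D N K \<in> sets lborel" for N K
  proof -
    have "closed (D N K)" unfolding D_def by (intro closed_INT ballI Eclosed)
    then show ?thesis by (simp add: borel_closed)
  qed
  have Dinc: "incseq (D N)" for N
    unfolding incseq_def D_def by auto
  have DM: "emeasure lborel (D N K) \<le> ennreal (M / real N)" if "N > 0" for N K
  proof -
    have "D N K \<subseteq> E N (Suc K)" unfolding D_def by auto
    then have "emeasure lborel (D N K) \<le> emeasure lborel (E N (Suc K))"
      using Eclosed[of N "Suc K"] by (intro emeasure_mono) (simp_all add: borel_closed)
    also have "\<dots> \<le> ennreal (M / real N)" using Emeas[of "Suc K" N] that by simp
    finally show ?thesis .
  qed
  define B where "B N = (\<Union>K. D N K)" for N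
  have Bsets: "B N \<in> sets lborel" for N
    unfolding B_def using Dsets by (intro sets.countable_UN) auto
  have BM: "emeasure lborel (B N) \<le> ennreal (M / real N)" if "N > 0" for N
  proof -
    have "emeasure lborel (B N) = (SUP K. emeasure lborel (D N K))"
      unfolding B_def by (rule SUP_emeasure_incseq[symmetric]) (use Dsets Dinc in auto)
    also have "\<dots> \<le> ennreal (M / real N)" by (intro SUP_least DM that)
    finally show ?thesis .
  qed
  define Z where "Z = (\<Inter>N. B (Suc N))"
  have Zsets: "Z \<in> sets lborel"
    unfolding Z_def by (rule sets.countable_INT) (use Bsets in auto)
  have Z0: "emeasure lborel Z \<le> 0"
  proof (rule ennreal_le_epsilon)
    fix e :: real assume e: "0 < e"
    obtain n :: nat where n: "M / e < real n" using reals_Archimedean2 by blast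
    have "M / real (Suc n) < e"
    proof -
      have "M < real n * e" using n e by (simp add: divide_less_eq)
      also have "\<dots> \<le> real (Suc n) * e" using e by (intro mult_right_mono) auto
      finally show ?thesis by (simp add: divide_less_eq mult.commute)
    qed
    have "emeasure lborel Z \<le> emeasure lborel (B (Suc n))"
      by (intro emeasure_mono Bsets) (auto simp: Z_def)
    also have "\<dots> \<le> ennreal (M / real (Suc n))" by (intro BM) simp
    also have "\<dots> \<le> ennreal e" using \<open>M / real (Suc n) < e\<close> by (intro ennreal_leI) simp
    finally show "emeasure lborel Z \<le> 0 + ennreal e" by simp
  qed
  have Znull: "Z \<in> null_sets lborel" using Zsets Z0 by (simp add: null_sets_def)
  have sub: "{x. infinite (crossing_set V x \<inter> {0<..T})} \<subseteq> Z"
  proof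
    fix x assume x: "x \<in> {x. infinite (crossing_set V x \<inter> {0<..T})}"
    show "x \<in> Z" unfolding Z_def
    proof
      fix N :: nat
      obtain K where K: "\<forall>k\<ge>K. x \<in> E (Suc N) k" using key x by blast
      then have "x \<in> D (Suc N) K" unfolding D_def by auto
      then show "x \<in> B (Suc N)" unfolding B_def by blast
    qed
  qed
  show ?thesis
    by (rule null_sets_completion_subset[OF sub null_sets_completionI[OF Znull]])
qed


theorem lemma1:
  fixes V :: "real \<Rightarrow> real"
  assumes "cadlag_on_nonneg V"
    and "finite_variation_on_compacts V"
  shows "{x. complex_level V x} \<in> null_sets lebesgue"
proof -
  note cad = assms(1)
  define A where "A n = {x. infinite (crossing_set V x \<inter> {0<..real (Suc n)})}" for n :: nat
  define J where "J = {t. 0 < t \<and> jump V t \<noteq> 0}"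
  have An: "A n \<in> null_sets lebesgue" for n
    unfolding A_def
    by (rule null_A[OF cad]) (use assms(2) in \<open>auto simp: finite_variation_on_compacts_def\<close>)
  have Jc: "countable (V ` J \<union> left_lim V ` J)"
    using jumps_countable[OF cad] unfolding J_def by auto
  have N1: "(\<Union>n. A n) \<in> null_sets lebesgue" using An by (rule null_sets_UN)
  have N2: "V ` J \<union> left_lim V ` J \<in> null_sets lebesgue"
    by (rule null_sets_completionI[OF countable_imp_null_set_lborel[OF Jc]])
  have sub: "{x. complex_level V x} \<subseteq> (\<Union>n. A n) \<union> (V ` J \<union> left_lim V ` J)"
  proof
    fix x assume "x \<in> {x. complex_level V x}"
    then have "(\<exists>s\<ge>0. s islimpt crossing_set V x) \<or> (\<exists>t>0. jump V t \<noteq> 0 \<and> (x = V t \<or> x = left_lim V t))"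
      unfolding complex_level_def simple_level_def by blast
    then show "x \<in> (\<Union>n. A n) \<union> (V ` J \<union> left_lim V ` J)"
    proof
      assume "\<exists>s\<ge>0. s islimpt crossing_set V x"
      then obtain s where s: "s \<ge> 0" "s islimpt crossing_set V x" by blast
      have inf: "infinite (crossing_set V x \<inter> ball s 1)"
        using s(2) unfolding islimpt_eq_infinite_ball by simp
      define n where "n = nat \<lceil>s\<rceil>"
      have "s \<le> real n" unfolding n_def by linarith
      have "crossing_set V x \<inter> ball s 1 \<subseteq> crossing_set V x \<inter> {0<..real (Suc n)}"
      proof
        fix t assume t: "t \<in> crossing_set V x \<inter> ball s 1"
        then have "t > 0" by (simp add: crossing_set_def)
        moreover have "t < s + 1" using t by (auto simp: dist_real_def)
        ultimately show "t \<in> crossing_set V x \<inter> {0<..real (Suc n)}"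
          using t \<open>s \<le> real n\<close> by auto
      qed
      then have "infinite (crossing_set V x \<inter> {0<..real (Suc n)})"
        using inf infinite_super by blast
      then show ?thesis unfolding A_def by blast
    next
      assume "\<exists>t>0. jump V t \<noteq> 0 \<and> (x = V t \<or> x = left_lim V t)"
      then show ?thesis unfolding J_def by blast
    qed
  qed
  show ?thesis
    by (rule null_sets_completion_subset[OF sub null_sets.Un[OF N1 N2]])
qed


end
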